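(* Let $-\infty<a<b<\infty$, let $y:[a,b]\to\mathbb{R}$ be $L$-Lipschitz and let $\gamma=\{t+iy(t):t\in[a,b]\}$. Let $\mu$ be a nonnegative measure with total mass $\beta<1$ on an open set $U\subset\mathbb{C}$ containing $\gamma$, and let $\varphi(z)=\int\log|z-\zeta|\,d\mu(\zeta)$. Then $$\int_\gamma e^{-\varphi}\,ds<C_{L,\beta,a,b},$$ where $C_{L,\beta,a,b}>0$ is a constant depending only on $L,\beta,a,b$.
   Context: $ds$ is arc length on $\gamma$: $\int_\gamma h\,ds=\int_a^b h(\gamma(t))|\gamma'(t)|dt$ with $\gamma(t)=t+iy(t)$, $|\gamma'(t)|=\sqrt{1+y'(t)^2}$. *)

theory Defs
  imports "HOL-Analysis.Analysis"
begin

text \<open>Logarithmic potential phi(z) = integral of log|z - zeta| d mu(zeta), as an extended real: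
  positive part minus negative part (the singular point zeta = z contributes +infinity
  to the negative part).\<close>
definition log_potential :: "complex measure \<Rightarrow> complex \<Rightarrow> ereal" where
  "log_potential \<mu> z =
     enn2ereal (\<integral>\<^sup>+ \<zeta>. ennreal (max 0 (ln (cmod (z - \<zeta>)))) \<partial>\<mu>)
   - enn2ereal (\<integral>\<^sup>+ \<zeta>. (if \<zeta> = z then \<infinity> else ennreal (max 0 (- ln (cmod (z - \<zeta>))))) \<partial>\<mu>)"

definition exp_neg_ereal :: "ereal \<Rightarrow> ennreal" where
  "exp_neg_ereal x = (case x of ereal r \<Rightarrow> ennreal (exp (- r)) | PInfty \<Rightarrow> 0 | MInfty \<Rightarrow> \<infinity>)"

text \<open>Arc-length integral over the graph gamma(t) = t + i y(t), t in [a,b]: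
  integral of h(gamma(t)) |gamma'(t)| dt with |gamma'(t)| = sqrt(1 + y'(t)^2).\<close>
definition graph_arc_integral :: "real \<Rightarrow> real \<Rightarrow> (real \<Rightarrow> real) \<Rightarrow> (complex \<Rightarrow> ennreal) \<Rightarrow> ennreal" where
  "graph_arc_integral a b y h =
     (\<integral>\<^sup>+ t \<in> {a..b}. h (Complex t (y t)) * ennreal (sqrt (1 + (deriv y t)\<^sup>2)) \<partial>lebesgue)"

end

theory Submission
  imports Defs
begin

lemma aux_div_le: "\<bar>q::real\<bar> \<le> L * \<bar>h\<bar> \<Longrightarrow> \<bar>h\<bar> > 0 \<Longrightarrow> \<bar>q\<bar> / \<bar>h\<bar> \<le> L"
  by (simp add: pos_divide_le_eq)

lemma aux_norm: "\<bar>q::real\<bar> / \<bar>h\<bar> \<le> L \<Longrightarrow> norm (q / h) \<le> L"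
  by (simp add: abs_divide)

lemma aux_sq_le: "\<bar>d::real\<bar> \<le> L \<Longrightarrow> d\<^sup>2 \<le> L\<^sup>2"
  by (metis abs_le_square_iff abs_of_nonneg abs_ge_zero order_trans)

lemma lip_deriv_bound:
  fixes y :: "real \<Rightarrow> real"
  assumes lip: "L-lipschitz_on {a..b} y" and t: "t \<in> {a<..<b}" and D: "DERIV y t :> D"
  shows "\<bar>D\<bar> \<le> L"
proof -
  have lim: "((\<lambda>h. (y (t + h) - y t) / h) \<longlongrightarrow> D) (at 0)"
    using D by (simp add: DERIV_def)
  have ev: "eventually (\<lambda>h. norm ((y (t + h) - y t) / h) \<le> L) (at (0::real))"
  proof -
    define d where "d = min (t - a) (b - t)"
    have d: "d > 0" using t by (auto simp: d_def)
    have "\<forall>h. 0 < dist h 0 \<and> dist h 0 < d \<longrightarrow> norm ((y (t + h) - y t) / h) \<le> L"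
    proof (intro allI impI)
      fix h :: real assume h: "0 < dist h 0 \<and> dist h 0 < d"
      hence "t + h \<in> {a..b}" using t by (auto simp: d_def dist_real_def)
      hence "dist (y (t+h)) (y t) \<le> L * dist (t+h) t"
        using lip t unfolding lipschitz_on_def by auto
      hence "\<bar>y (t+h) - y t\<bar> \<le> L * \<bar>h\<bar>" by (simp add: dist_real_def)
      moreover have "\<bar>h\<bar> > 0" using h by auto
      ultimately have "\<bar>y (t+h) - y t\<bar> / \<bar>h\<bar> \<le> L"
        by (rule aux_div_le)
      thus "norm ((y (t + h) - y t) / h) \<le> L"
        by (rule aux_norm)
    qed
    thus ?thesis using d unfolding eventually_at by (intro exI[of _ d]) auto
  qed
  have "norm D \<le> L"
    by (rule Lim_norm_ubound[OF _ lim ev]) simp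
  thus ?thesis by simp
qed

lemma deriv_sqrt_bound:
  fixes y :: "real \<Rightarrow> real"
  assumes lip: "L-lipschitz_on {a..b} y" and t: "t \<in> {a<..<b}"
  shows "sqrt (1 + (deriv y t)\<^sup>2) \<le> sqrt (1 + L\<^sup>2) + sqrt (1 + (Eps (\<lambda>_::real. False))\<^sup>2)"
proof (cases "\<exists>D. DERIV y t :> D")
  case True
  then obtain D where D: "DERIV y t :> D" by blast
  hence "deriv y t = D" by (rule DERIV_imp_deriv)
  moreover have "D\<^sup>2 \<le> L\<^sup>2" by (rule aux_sq_le[OF lip_deriv_bound[OF lip t D]])
  ultimately have "(deriv y t)\<^sup>2 \<le> L\<^sup>2"
    by simp
  hence "sqrt (1 + (deriv y t)\<^sup>2) \<le> sqrt (1 + L\<^sup>2)" by simp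
  moreover have "0 \<le> sqrt (1 + (Eps (\<lambda>_::real. False))\<^sup>2)" by simp
  ultimately show ?thesis by linarith
next
  case False
  hence "(\<lambda>D. DERIV y t :> D) = (\<lambda>_. False)" by auto
  hence "deriv y t = Eps (\<lambda>_::real. False)" unfolding deriv_def by simp
  moreover have "0 \<le> sqrt (1 + L\<^sup>2)" by simp
  ultimately show ?thesis by simp
qed

definition expE :: "ennreal \<Rightarrow> ennreal" where
  "expE x = (if x = \<infinity> then \<infinity> else ennreal (exp (enn2real x)))"

lemma exp_neg_le_expE:
  "exp_neg_ereal (enn2ereal P - enn2ereal N) \<le> expE N"
proof (cases "N = \<infinity>")
  case True thus ?thesis by (simp add: expE_def)
next
  case False
  then obtain n where n: "N = ennreal n" "0 \<le> n" by (cases N) auto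
  show ?thesis
  proof (cases "P = \<infinity>")
    case True
    thus ?thesis using n by (simp add: exp_neg_ereal_def)
  next
    case False
    then obtain p where p: "P = ennreal p" "0 \<le> p" by (cases P) auto
    have "enn2ereal P - enn2ereal N = ereal (p - n)" using n p by simp
    hence "exp_neg_ereal (enn2ereal P - enn2ereal N) = ennreal (exp (- (p - n)))"
      by (simp add: exp_neg_ereal_def)
    also have "\<dots> \<le> ennreal (exp n)" using p by (intro ennreal_leI) simp
    also have "\<dots> = expE N" using n by (simp add: expE_def)
    finally show ?thesis .
  qed
qed

lemma tangent_bound:
  fixes \<mu> :: "complex measure" and z :: complex and \<beta> :: real
  assumes sets: "sets \<mu> = sets borel" and mass: "emeasure \<mu> UNIV = ennreal \<beta>" and \<beta>: "0 < \<beta>"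
  shows "ennreal \<beta> * expE (\<integral>\<^sup>+ \<zeta>. (if \<zeta> = z then \<infinity> else ennreal (max 0 (- ln (cmod (z - \<zeta>))))) \<partial>\<mu>)
    \<le> (\<integral>\<^sup>+ \<zeta>. (if \<zeta> = z then \<infinity> else ennreal (exp (\<beta> * max 0 (- ln (cmod (z - \<zeta>)))))) \<partial>\<mu>)"
proof -
  define G where "G = (\<lambda>\<zeta>. if \<zeta> = z then \<infinity> else ennreal (max 0 (- ln (cmod (z - \<zeta>)))))"
  define E where "E = (\<lambda>\<zeta>. if \<zeta> = z then \<infinity> else ennreal (exp (\<beta> * max 0 (- ln (cmod (z - \<zeta>))))))"
  have meq: "borel_measurable \<mu> = borel_measurable borel"
    by (rule measurable_cong_sets[OF sets refl])
  have sp: "space \<mu> = UNIV" using sets_eq_imp_space_eq[OF sets] by simp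
  have Gm: "G \<in> borel_measurable \<mu>" unfolding meq G_def by measurable
  have Em: "E \<in> borel_measurable \<mu>" unfolding meq E_def by measurable
  show ?thesis
  proof (cases "(\<integral>\<^sup>+ \<zeta>. G \<zeta> \<partial>\<mu>) = \<infinity>")
    case True
    have "(\<integral>\<^sup>+ \<zeta>. ennreal \<beta> * G \<zeta> \<partial>\<mu>) \<le> (\<integral>\<^sup>+ \<zeta>. E \<zeta> \<partial>\<mu>)"
    proof (intro nn_integral_mono)
      fix \<zeta>
      show "ennreal \<beta> * G \<zeta> \<le> E \<zeta>"
      proof (cases "\<zeta> = z")
        case True thus ?thesis by (simp add: E_def)
      next
        case False
        define x where "x = max 0 (- ln (cmod (z - \<zeta>)))"
        have x0: "0 \<le> x" by (simp add: x_def)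
        have "\<beta> * x \<le> exp (\<beta> * x)" using exp_ge_add_one_self[of "\<beta> * x"] by linarith
        hence "ennreal (\<beta> * x) \<le> ennreal (exp (\<beta> * x))" by (rule ennreal_leI)
        thus ?thesis using False x0 \<beta> by (simp add: G_def E_def x_def[symmetric] ennreal_mult)
      qed
    qed
    moreover have "(\<integral>\<^sup>+ \<zeta>. ennreal \<beta> * G \<zeta> \<partial>\<mu>) = \<infinity>"
      using True \<beta> by (simp add: nn_integral_cmult[OF Gm] ennreal_mult_top)
    ultimately have "(\<integral>\<^sup>+ \<zeta>. E \<zeta> \<partial>\<mu>) = \<infinity>" by (simp add: top_unique)
    thus ?thesis by (simp add: G_def[symmetric] E_def[symmetric])
  next
    case False
    then obtain mm where mm: "(\<integral>\<^sup>+ \<zeta>. G \<zeta> \<partial>\<mu>) = ennreal mm" "0 \<le> mm"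
      by (cases "(\<integral>\<^sup>+ \<zeta>. G \<zeta> \<partial>\<mu>)") auto
    define w where "w = exp mm"
    have w0: "0 < w" by (simp add: w_def)
    have pw: "ennreal w + ennreal (w * \<beta>) * G \<zeta> \<le> E \<zeta> + ennreal (w * mm)" for \<zeta>
    proof (cases "\<zeta> = z")
      case True thus ?thesis by (simp add: E_def)
    next
      case False
      define x where "x = max 0 (- ln (cmod (z - \<zeta>)))"
      have x0: "0 \<le> x" by (simp add: x_def)
      have "w * (1 + (\<beta> * x - mm)) \<le> w * exp (\<beta> * x - mm)"
        using exp_ge_add_one_self[of "\<beta> * x - mm"] w0 by (intro mult_left_mono) auto
      also have "w * exp (\<beta> * x - mm) = exp (\<beta> * x)"
        by (simp add: w_def exp_diff)
      finally have r: "w + w * \<beta> * x \<le> exp (\<beta> * x) + w * mm" by (simp add: algebra_simps)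
      have "ennreal w + ennreal (w * \<beta>) * G \<zeta> = ennreal (w + w * \<beta> * x)"
        using False x0 w0 \<beta> by (simp add: G_def x_def[symmetric] ennreal_mult ennreal_plus)
      also have "\<dots> \<le> ennreal (exp (\<beta> * x) + w * mm)" using r by (rule ennreal_leI)
      also have "\<dots> = E \<zeta> + ennreal (w * mm)"
        using False w0 mm(2) by (simp add: E_def x_def[symmetric] ennreal_plus)
      finally show ?thesis .
    qed
    have "(\<integral>\<^sup>+ \<zeta>. ennreal w + ennreal (w * \<beta>) * G \<zeta> \<partial>\<mu>) \<le> (\<integral>\<^sup>+ \<zeta>. E \<zeta> + ennreal (w * mm) \<partial>\<mu>)"
      by (intro nn_integral_mono pw)
    moreover have "(\<integral>\<^sup>+ \<zeta>. ennreal w + ennreal (w * \<beta>) * G \<zeta> \<partial>\<mu>) = ennreal w * ennreal \<beta> + ennreal (w * \<beta>) * ennreal mm"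
      using Gm mm(1) by (simp add: nn_integral_add nn_integral_cmult sp mass)
    moreover have "(\<integral>\<^sup>+ \<zeta>. E \<zeta> + ennreal (w * mm) \<partial>\<mu>) = (\<integral>\<^sup>+ \<zeta>. E \<zeta> \<partial>\<mu>) + ennreal (w * mm) * ennreal \<beta>"
      using Em by (simp add: nn_integral_add sp mass)
    ultimately have ineq: "ennreal (w * \<beta>) + ennreal (w * mm * \<beta>) \<le> (\<integral>\<^sup>+ \<zeta>. E \<zeta> \<partial>\<mu>) + ennreal (w * mm * \<beta>)"
      using w0 \<beta> mm(2) by (simp add: ennreal_mult[symmetric] mult_ac)
    have "ennreal (w * \<beta>) \<le> (\<integral>\<^sup>+ \<zeta>. E \<zeta> \<partial>\<mu>)"
      using ineq by (simp add: add.commute[of _ "ennreal (w * mm * \<beta>)"] ennreal_add_left_cancel_le)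
    moreover have "expE (\<integral>\<^sup>+ \<zeta>. G \<zeta> \<partial>\<mu>) = ennreal w" using mm by (simp add: expE_def w_def)
    ultimately show ?thesis using w0 \<beta>
      by (simp add: G_def[symmetric] E_def[symmetric] ennreal_mult[symmetric] mult.commute)
  qed
qed

lemma powr_piece:
  fixes \<beta> :: real assumes "0 < \<beta>" "\<beta> < 1"
  shows "(\<integral>\<^sup>+ x. ennreal (indicator {0..1} x * x powr (-\<beta>)) \<partial>lborel) = ennreal (1 / (1 - \<beta>))"
proof -
  have h0: "((\<lambda>x. x powr (-\<beta>)) has_integral (1 powr (-\<beta>+1) / (-\<beta>+1))) {0..1::real}"
    by (rule has_integral_powr_from_0) (use assms in auto)
  have e: "1 powr (-\<beta>+1) / (-\<beta>+1) = 1 / (1 - \<beta>)" by simp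
  have h: "((\<lambda>x. x powr (-\<beta>)) has_integral (1 / (1 - \<beta>))) {0..1::real}"
    using h0 unfolding e .
  show ?thesis
    by (rule nn_integral_has_integral_lebesgue[OF _ h]) simp
qed

lemma sym_piece:
  fixes \<beta> :: real assumes b: "0 < \<beta>" "\<beta> < 1"
  shows "(\<integral>\<^sup>+ x. ennreal (indicator {-1..1} x * \<bar>x\<bar> powr (-\<beta>)) \<partial>lborel) \<le> ennreal (2 / (1 - \<beta>))"
proof -
  define f where "f = (\<lambda>x::real. ennreal (indicator {0..1} x * x powr (-\<beta>)))"
  have fm: "f \<in> borel_measurable borel" unfolding f_def by measurable
  have pw: "ennreal (indicator {-1..1} x * \<bar>x\<bar> powr (-\<beta>)) \<le> f x + f (0 + (-1) * x)" for x :: real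
  proof (cases "0 \<le> x")
    case True thus ?thesis by (auto simp: f_def split: split_indicator)
  next
    case False thus ?thesis by (auto simp: f_def split: split_indicator)
  qed
  have "(\<integral>\<^sup>+ x. ennreal (indicator {-1..1} x * \<bar>x\<bar> powr (-\<beta>)) \<partial>lborel)
      \<le> (\<integral>\<^sup>+ x. f x + f (0 + (-1) * x) \<partial>lborel)"
    by (intro nn_integral_mono pw)
  also have "\<dots> = (\<integral>\<^sup>+ x. f x \<partial>lborel) + (\<integral>\<^sup>+ x. f (0 + (-1) * x) \<partial>lborel)"
    using fm by (intro nn_integral_add) auto
  also have "(\<integral>\<^sup>+ x. f (0 + (-1) * x) \<partial>lborel) = (\<integral>\<^sup>+ x. f x \<partial>lborel)"
    using nn_integral_real_affine[OF fm, of "-1" 0] by simp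
  also have "(\<integral>\<^sup>+ x. f x \<partial>lborel) = ennreal (1 / (1 - \<beta>))"
    unfolding f_def by (rule powr_piece[OF b])
  also have "ennreal (1 / (1 - \<beta>)) + ennreal (1 / (1 - \<beta>)) = ennreal (2 / (1 - \<beta>))"
    using b by (simp add: ennreal_plus[symmetric] del: ennreal_plus)
  finally show ?thesis .
qed

lemma line_bound:
  fixes \<beta> a b c :: real assumes b: "0 < \<beta>" "\<beta> < 1" and ab: "a \<le> b"
  shows "(\<integral>\<^sup>+ t. indicator {a..b} t * (if t = c then \<infinity> else ennreal (1 + \<bar>t - c\<bar> powr (-\<beta>))) \<partial>lborel)
     \<le> ennreal (2 * (b - a) + 2 / (1 - \<beta>))"
proof -
  define g where "g = (\<lambda>x::real. ennreal (indicator {-1..1} x * \<bar>x\<bar> powr (-\<beta>)))"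
  have gm: "g \<in> borel_measurable borel" unfolding g_def by measurable
  have "(\<integral>\<^sup>+ t. indicator {a..b} t * (if t = c then \<infinity> else ennreal (1 + \<bar>t - c\<bar> powr (-\<beta>))) \<partial>lborel)
     = (\<integral>\<^sup>+ t. indicator {a..b} t * ennreal (1 + \<bar>t - c\<bar> powr (-\<beta>)) \<partial>lborel)"
    by (rule nn_integral_cong_AE, rule eventually_mono[OF AE_lborel_singleton[of c]]) auto
  also have "\<dots> \<le> (\<integral>\<^sup>+ t. ennreal 2 * indicator {a..b} t + g (- c + 1 * t) \<partial>lborel)"
  proof (intro nn_integral_mono)
    fix t :: real
    show "indicator {a..b} t * ennreal (1 + \<bar>t - c\<bar> powr (-\<beta>)) \<le> ennreal 2 * indicator {a..b} t + g (- c + 1 * t)"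
    proof (cases "t \<in> {a..b}")
      case False thus ?thesis by simp
    next
      case True
      define p where "p = \<bar>t - c\<bar> powr (-\<beta>)"
      have p0: "0 \<le> p" by (simp add: p_def)
      have eq: "\<bar>- c + 1 * t\<bar> = \<bar>t - c\<bar>" by simp
      have r: "1 + p \<le> 2 + indicator {-1..1} (- c + 1 * t) * \<bar>- c + 1 * t\<bar> powr (-\<beta>)"
      proof (cases "\<bar>t - c\<bar> \<le> 1")
        case True
        hence "- c + 1 * t \<in> {-1..1}" by auto
        thus ?thesis unfolding eq p_def by simp
      next
        case False
        hence "\<bar>t - c\<bar> powr (-\<beta>) \<le> 1 powr (-\<beta>)"
          using b by (intro powr_mono2') auto
        hence "p \<le> 1" by (simp add: p_def)
        moreover have "0 \<le> indicator {-1..1} (- c + 1 * t) * \<bar>- c + 1 * t\<bar> powr (-\<beta>)" by simp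
        ultimately show ?thesis by linarith
      qed
      have "indicator {a..b} t * ennreal (1 + \<bar>t - c\<bar> powr (-\<beta>)) = ennreal (1 + p)"
        using True by (simp add: p_def)
      also have "\<dots> \<le> ennreal (2 + indicator {-1..1} (- c + 1 * t) * \<bar>- c + 1 * t\<bar> powr (-\<beta>))"
        using r by (rule ennreal_leI)
      also have "\<dots> = ennreal 2 * indicator {a..b} t + g (- c + 1 * t)"
        using True by (subst ennreal_plus) (auto simp: g_def)
      finally show ?thesis .
    qed
  qed
  also have "\<dots> = ennreal 2 * emeasure lborel {a..b} + (\<integral>\<^sup>+ t. g (- c + 1 * t) \<partial>lborel)"
    using gm by (subst nn_integral_add) (auto simp: nn_integral_cmult_indicator)
  also have "(\<integral>\<^sup>+ t. g (- c + 1 * t) \<partial>lborel) = (\<integral>\<^sup>+ t. g t \<partial>lborel)"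
    using nn_integral_real_affine[OF gm, of 1 "-c"] by simp
  also have "(\<integral>\<^sup>+ t. g t \<partial>lborel) \<le> ennreal (2 / (1 - \<beta>))"
    unfolding g_def by (rule sym_piece[OF b])
  also have "ennreal 2 * emeasure lborel {a..b} = ennreal (2 * (b - a))"
    by (subst ennreal_mult) (use ab in auto)
  finally show ?thesis
    using ab b by (simp add: ennreal_plus[symmetric] del: ennreal_plus)
qed


lemma pointwise_H:
  fixes \<beta> t :: real and z \<zeta> :: complex
  assumes b: "0 < \<beta>" and z: "Re z = t"
  shows "(if \<zeta> = z then \<infinity> else ennreal (exp (\<beta> * max 0 (- ln (cmod (z - \<zeta>))))))
     \<le> (if t = Re \<zeta> then \<infinity> else ennreal (1 + \<bar>t - Re \<zeta>\<bar> powr (-\<beta>)))"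
proof (cases "t = Re \<zeta>")
  case True thus ?thesis by simp
next
  case False
  hence ne: "\<zeta> \<noteq> z" using z by auto
  define s where "s = \<bar>t - Re \<zeta>\<bar>"
  define r where "r = cmod (z - \<zeta>)"
  have s0: "0 < s" using False by (simp add: s_def)
  have "s \<le> r" unfolding s_def r_def using abs_Re_le_cmod[of "z - \<zeta>"] z by simp
  hence r0: "0 < r" using s0 by linarith
  have "exp (\<beta> * max 0 (- ln r)) \<le> exp 0 + exp (\<beta> * (- ln r))"
  proof (cases "0 \<le> - ln r")
    case True thus ?thesis by (simp add: max_def)
  next
    case False thus ?thesis by (simp add: max_def)
  qed
  also have "exp (\<beta> * (- ln r)) = r powr (-\<beta>)" using r0 by (simp add: powr_def)
  also have "r powr (-\<beta>) \<le> s powr (-\<beta>)" using b s0 \<open>s \<le> r\<close> by (intro powr_mono2') auto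
  finally have "exp (\<beta> * max 0 (- ln r)) \<le> 1 + s powr (-\<beta>)" by simp
  hence "ennreal (exp (\<beta> * max 0 (- ln r))) \<le> ennreal (1 + s powr (-\<beta>))" by (rule ennreal_leI)
  thus ?thesis using ne False by (simp add: s_def r_def)
qed


lemma main_pos:
  fixes a b L \<beta> :: real and y :: "real \<Rightarrow> real" and \<mu> :: "complex measure"
  assumes ab: "a < b" and b: "0 < \<beta>" "\<beta> < 1" and lip: "L-lipschitz_on {a..b} y"
    and sets: "sets \<mu> = sets borel" and mass: "emeasure \<mu> UNIV = ennreal \<beta>"
  shows "graph_arc_integral a b y (\<lambda>z. exp_neg_ereal (log_potential \<mu> z))
     \<le> ennreal ((sqrt (1 + L\<^sup>2) + sqrt (1 + (Eps (\<lambda>_::real. False))\<^sup>2)) * (2 * (b - a) + 2 / (1 - \<beta>)))"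
proof -
  define S where "S = sqrt (1 + L\<^sup>2) + sqrt (1 + (Eps (\<lambda>_::real. False))\<^sup>2)"
  define K where "K = 2 * (b - a) + 2 / (1 - \<beta>)"
  have S0: "0 \<le> S" by (simp add: S_def)
  have K0: "0 \<le> K" using ab b by (simp add: K_def)
  define H where "H = (\<lambda>t \<zeta>. indicator {a..b} t * (if t = Re \<zeta> then \<infinity> else ennreal (1 + \<bar>t - Re \<zeta>\<bar> powr (-\<beta>))))"
  have sp: "space \<mu> = UNIV" using sets_eq_imp_space_eq[OF sets] by simp
  interpret F: finite_measure \<mu> by (rule finite_measureI) (simp add: sp mass)
  interpret P: pair_sigma_finite lborel \<mu> by unfold_locales
  have Hm: "case_prod (\<lambda>t \<zeta>. ennreal (S / \<beta>) * H t \<zeta>) \<in> borel_measurable (lborel \<Otimes>\<^sub>M \<mu>)"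
  proof -
    have "sets (lborel \<Otimes>\<^sub>M \<mu>) = sets (borel \<Otimes>\<^sub>M borel)"
      by (rule sets_pair_measure_cong) (simp_all add: sets)
    hence eq: "borel_measurable (lborel \<Otimes>\<^sub>M \<mu>) = borel_measurable (borel \<Otimes>\<^sub>M borel)"
      by (rule measurable_cong_sets) simp
    show ?thesis unfolding eq H_def by measurable
  qed
  have pt: "(\<lambda>z. exp_neg_ereal (log_potential \<mu> z)) (Complex t (y t)) * ennreal (sqrt (1 + (deriv y t)\<^sup>2)) * indicator {a..b} t
      \<le> ennreal (S / \<beta>) * (\<integral>\<^sup>+ \<zeta>. H t \<zeta> \<partial>\<mu>)" if t: "t \<in> {a<..<b}" for t
  proof -
    define z where "z = Complex t (y t)"
    have "exp_neg_ereal (log_potential \<mu> z)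
       \<le> expE (\<integral>\<^sup>+ \<zeta>. (if \<zeta> = z then \<infinity> else ennreal (max 0 (- ln (cmod (z - \<zeta>))))) \<partial>\<mu>)"
      unfolding log_potential_def by (rule exp_neg_le_expE)
    also have "\<dots> = ennreal (1 / \<beta>) * (ennreal \<beta> * expE (\<integral>\<^sup>+ \<zeta>. (if \<zeta> = z then \<infinity> else ennreal (max 0 (- ln (cmod (z - \<zeta>))))) \<partial>\<mu>))"
      using b by (simp add: mult.assoc[symmetric] ennreal_mult[symmetric])
    also have "\<dots> \<le> ennreal (1 / \<beta>) * (\<integral>\<^sup>+ \<zeta>. (if \<zeta> = z then \<infinity> else ennreal (exp (\<beta> * max 0 (- ln (cmod (z - \<zeta>)))))) \<partial>\<mu>)"
      by (intro mult_left_mono tangent_bound[OF sets mass b(1)]) simp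
    also have "\<dots> \<le> ennreal (1 / \<beta>) * (\<integral>\<^sup>+ \<zeta>. H t \<zeta> \<partial>\<mu>)"
    proof (intro mult_left_mono nn_integral_mono)
      fix \<zeta>
      show "(if \<zeta> = z then \<infinity> else ennreal (exp (\<beta> * max 0 (- ln (cmod (z - \<zeta>)))))) \<le> H t \<zeta>"
        using pointwise_H[OF b(1), of z t \<zeta>] t by (simp add: H_def z_def)
    qed simp
    finally have e1: "exp_neg_ereal (log_potential \<mu> z) \<le> ennreal (1 / \<beta>) * (\<integral>\<^sup>+ \<zeta>. H t \<zeta> \<partial>\<mu>)" .
    have e2: "ennreal (sqrt (1 + (deriv y t)\<^sup>2)) \<le> ennreal S"
      unfolding S_def by (intro ennreal_leI deriv_sqrt_bound[OF lip t])
    have "exp_neg_ereal (log_potential \<mu> z) * ennreal (sqrt (1 + (deriv y t)\<^sup>2)) * indicator {a..b} t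
       = exp_neg_ereal (log_potential \<mu> z) * ennreal (sqrt (1 + (deriv y t)\<^sup>2))" using t by simp
    also have "\<dots> \<le> (ennreal (1 / \<beta>) * (\<integral>\<^sup>+ \<zeta>. H t \<zeta> \<partial>\<mu>)) * ennreal S"
      by (intro mult_mono e1 e2) auto
    also have "\<dots> = ennreal (S / \<beta>) * (\<integral>\<^sup>+ \<zeta>. H t \<zeta> \<partial>\<mu>)"
    proof -
      have "ennreal (S / \<beta>) = ennreal S * ennreal (1 / \<beta>)"
        using S0 b by (subst ennreal_mult[symmetric]) auto
      thus ?thesis by (simp add: mult_ac)
    qed
    finally show ?thesis by (simp add: z_def)
  qed
  have "graph_arc_integral a b y (\<lambda>z. exp_neg_ereal (log_potential \<mu> z))
     = (\<integral>\<^sup>+ t. (\<lambda>z. exp_neg_ereal (log_potential \<mu> z)) (Complex t (y t)) * ennreal (sqrt (1 + (deriv y t)\<^sup>2)) * indicator {a..b} t \<partial>lborel)"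
    unfolding graph_arc_integral_def nn_integral_completion ..
  also have "\<dots> \<le> (\<integral>\<^sup>+ t. (\<integral>\<^sup>+ \<zeta>. ennreal (S / \<beta>) * H t \<zeta> \<partial>\<mu>) \<partial>lborel)"
  proof (rule nn_integral_mono_AE)
    have "AE t in lborel. t \<noteq> a \<and> t \<noteq> b"
      using AE_lborel_singleton[of a] AE_lborel_singleton[of b] by eventually_elim auto
    thus "AE t in lborel. (\<lambda>z. exp_neg_ereal (log_potential \<mu> z)) (Complex t (y t)) * ennreal (sqrt (1 + (deriv y t)\<^sup>2)) * indicator {a..b} t
      \<le> (\<integral>\<^sup>+ \<zeta>. ennreal (S / \<beta>) * H t \<zeta> \<partial>\<mu>)"
    proof (rule eventually_mono)
      fix t assume tne: "t \<noteq> a \<and> t \<noteq> b"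
      show "(\<lambda>z. exp_neg_ereal (log_potential \<mu> z)) (Complex t (y t)) * ennreal (sqrt (1 + (deriv y t)\<^sup>2)) * indicator {a..b} t
      \<le> (\<integral>\<^sup>+ \<zeta>. ennreal (S / \<beta>) * H t \<zeta> \<partial>\<mu>)"
      proof (cases "t \<in> {a..b}")
        case False thus ?thesis by simp
      next
        case True
        hence "t \<in> {a<..<b}" using tne by auto
        have meq: "borel_measurable \<mu> = borel_measurable borel"
          by (rule measurable_cong_sets[OF sets refl])
        have "(\<lambda>\<zeta>. H t \<zeta>) \<in> borel_measurable \<mu>" unfolding meq H_def by measurable
        hence "(\<integral>\<^sup>+ \<zeta>. ennreal (S / \<beta>) * H t \<zeta> \<partial>\<mu>) = ennreal (S / \<beta>) * (\<integral>\<^sup>+ \<zeta>. H t \<zeta> \<partial>\<mu>)"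
          by (rule nn_integral_cmult)
        with pt[OF \<open>t \<in> {a<..<b}\<close>] show ?thesis by simp
      qed
    qed
  qed
  also have "\<dots> = (\<integral>\<^sup>+ \<zeta>. (\<integral>\<^sup>+ t. ennreal (S / \<beta>) * H t \<zeta> \<partial>lborel) \<partial>\<mu>)"
    using P.Fubini'[OF Hm] by simp
  also have "\<dots> \<le> (\<integral>\<^sup>+ \<zeta>. ennreal (S / \<beta>) * ennreal K \<partial>\<mu>)"
  proof (rule nn_integral_mono)
    fix \<zeta>
    have Hm1: "H' \<in> borel_measurable lborel" if "H' = (\<lambda>t. H t \<zeta>)" for H'
      unfolding that H_def by measurable
    have "(\<integral>\<^sup>+ t. ennreal (S / \<beta>) * H t \<zeta> \<partial>lborel) = ennreal (S / \<beta>) * (\<integral>\<^sup>+ t. H t \<zeta> \<partial>lborel)"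
      by (rule nn_integral_cmult) (rule Hm1, rule refl)
    also have "\<dots> \<le> ennreal (S / \<beta>) * ennreal K"
      unfolding H_def K_def by (intro mult_left_mono line_bound b) (use ab in auto)
    finally show "(\<integral>\<^sup>+ t. ennreal (S / \<beta>) * H t \<zeta> \<partial>lborel) \<le> ennreal (S / \<beta>) * ennreal K" .
  qed
  also have "\<dots> = ennreal (S * K)"
    using b S0 K0 by (simp add: sp mass ennreal_mult[symmetric])
  finally show ?thesis by (simp add: S_def K_def)
qed


lemma main_zero:
  fixes a b L :: real and y :: "real \<Rightarrow> real" and \<mu> :: "complex measure"
  assumes ab: "a < b" and lip: "L-lipschitz_on {a..b} y"
    and sets: "sets \<mu> = sets borel" and mass: "emeasure \<mu> UNIV = ennreal 0"
  shows "graph_arc_integral a b y (\<lambda>z. exp_neg_ereal (log_potential \<mu> z))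
     \<le> ennreal ((sqrt (1 + L\<^sup>2) + sqrt (1 + (Eps (\<lambda>_::real. False))\<^sup>2)) * (b - a))"
proof -
  define S where "S = sqrt (1 + L\<^sup>2) + sqrt (1 + (Eps (\<lambda>_::real. False))\<^sup>2)"
  have S0: "0 \<le> S" by (simp add: S_def)
  have sp: "space \<mu> = UNIV" using sets_eq_imp_space_eq[OF sets] by simp
  have zero: "(\<integral>\<^sup>+ \<zeta>. f \<zeta> \<partial>\<mu>) = 0" for f :: "complex \<Rightarrow> ennreal"
  proof -
    have "(\<integral>\<^sup>+ \<zeta>. f \<zeta> \<partial>\<mu>) \<le> (\<integral>\<^sup>+ \<zeta>. \<infinity> \<partial>\<mu>)" by (intro nn_integral_mono) simp
    also have "\<dots> = 0" by (simp add: sp mass)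
    finally show ?thesis by simp
  qed
  have one: "exp_neg_ereal (log_potential \<mu> z) = 1" for z
  proof -
    have "exp_neg_ereal (ereal 0) = 1" by (simp add: exp_neg_ereal_def)
    thus ?thesis unfolding log_potential_def zero by (simp add: zero_ereal_def[symmetric])
  qed
  have "graph_arc_integral a b y (\<lambda>z. exp_neg_ereal (log_potential \<mu> z))
     = (\<integral>\<^sup>+ t. (\<lambda>z. exp_neg_ereal (log_potential \<mu> z)) (Complex t (y t)) * ennreal (sqrt (1 + (deriv y t)\<^sup>2)) * indicator {a..b} t \<partial>lborel)"
    unfolding graph_arc_integral_def nn_integral_completion ..
  also have "\<dots> \<le> (\<integral>\<^sup>+ t. ennreal S * indicator {a..b} t \<partial>lborel)"
  proof (rule nn_integral_mono_AE)
    have "AE t in lborel. t \<noteq> a \<and> t \<noteq> b"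
      using AE_lborel_singleton[of a] AE_lborel_singleton[of b] by eventually_elim auto
    thus "AE t in lborel. (\<lambda>z. exp_neg_ereal (log_potential \<mu> z)) (Complex t (y t)) * ennreal (sqrt (1 + (deriv y t)\<^sup>2)) * indicator {a..b} t
      \<le> ennreal S * indicator {a..b} t"
    proof (rule eventually_mono)
      fix t assume tne: "t \<noteq> a \<and> t \<noteq> b"
      show "(\<lambda>z. exp_neg_ereal (log_potential \<mu> z)) (Complex t (y t)) * ennreal (sqrt (1 + (deriv y t)\<^sup>2)) * indicator {a..b} t
      \<le> ennreal S * indicator {a..b} t"
      proof (cases "t \<in> {a..b}")
        case False thus ?thesis by simp
      next
        case True
        hence "t \<in> {a<..<b}" using tne by auto
        hence "ennreal (sqrt (1 + (deriv y t)\<^sup>2)) \<le> ennreal S"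
          unfolding S_def by (intro ennreal_leI deriv_sqrt_bound[OF lip])
        thus ?thesis using True by (simp add: one)
      qed
    qed
  qed
  also have "\<dots> = ennreal (S * (b - a))"
    using ab S0 by (simp add: nn_integral_cmult_indicator ennreal_mult)
  finally show ?thesis by (simp add: S_def)
qed

theorem theorem2p9:
  fixes a b L \<beta> :: real
  assumes "a < b" and "0 \<le> \<beta>" and "\<beta> < 1"
  shows "\<exists>C>0. \<forall>(y :: real \<Rightarrow> real) (\<mu> :: complex measure) (U :: complex set).
           L-lipschitz_on {a..b} y \<and> open U \<and> (\<forall>t\<in>{a..b}. Complex t (y t) \<in> U) \<and>
           sets \<mu> = sets borel \<and> emeasure \<mu> UNIV = ennreal \<beta> \<and> emeasure \<mu> (- U) = 0
           \<longrightarrow> graph_arc_integral a b y (\<lambda>z. exp_neg_ereal (log_potential \<mu> z)) < ennreal C"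
proof -
  define S where "S = sqrt (1 + L\<^sup>2) + sqrt (1 + (Eps (\<lambda>_::real. False))\<^sup>2)"
  have S0: "0 \<le> S" by (simp add: S_def)
  show ?thesis
  proof (cases "\<beta> = 0")
    case True
    show ?thesis
    proof (intro exI[of _ "S * (b - a) + 1"] conjI allI impI)
      show "0 < S * (b - a) + 1" using S0 assms by (simp add: add_nonneg_pos)
      fix y :: "real \<Rightarrow> real" and \<mu> :: "complex measure" and U :: "complex set"
      assume h: "L-lipschitz_on {a..b} y \<and> open U \<and> (\<forall>t\<in>{a..b}. Complex t (y t) \<in> U) \<and>
           sets \<mu> = sets borel \<and> emeasure \<mu> UNIV = ennreal \<beta> \<and> emeasure \<mu> (- U) = 0"
      have "graph_arc_integral a b y (\<lambda>z. exp_neg_ereal (log_potential \<mu> z)) \<le> ennreal (S * (b - a))"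
        unfolding S_def by (rule main_zero) (use h True assms in auto)
      also have "\<dots> < ennreal (S * (b - a) + 1)"
        using S0 assms by (subst ennreal_less_iff) auto
      finally show "graph_arc_integral a b y (\<lambda>z. exp_neg_ereal (log_potential \<mu> z)) < ennreal (S * (b - a) + 1)" .
    qed
  next
    case False
    hence bpos: "0 < \<beta>" using assms by auto
    define K where "K = 2 * (b - a) + 2 / (1 - \<beta>)"
    have K0: "0 \<le> K" using assms by (simp add: K_def)
    show ?thesis
    proof (intro exI[of _ "S * K + 1"] conjI allI impI)
      show "0 < S * K + 1" using S0 K0 by (simp add: add_nonneg_pos)
      fix y :: "real \<Rightarrow> real" and \<mu> :: "complex measure" and U :: "complex set"
      assume h: "L-lipschitz_on {a..b} y \<and> open U \<and> (\<forall>t\<in>{a..b}. Complex t (y t) \<in> U) \<and>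
           sets \<mu> = sets borel \<and> emeasure \<mu> UNIV = ennreal \<beta> \<and> emeasure \<mu> (- U) = 0"
      have "graph_arc_integral a b y (\<lambda>z. exp_neg_ereal (log_potential \<mu> z)) \<le> ennreal (S * K)"
        unfolding S_def K_def by (rule main_pos) (use h bpos assms in auto)
      also have "\<dots> < ennreal (S * K + 1)"
        using S0 K0 by (subst ennreal_less_iff) auto
      finally show "graph_arc_integral a b y (\<lambda>z. exp_neg_ereal (log_potential \<mu> z)) < ennreal (S * K + 1)" .
    qed
  qed
qed

end
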